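(* Let $\Omega\subset\mathbb{R}^n$ be a domain, $\mathcal{S}$ any basis of shapes in $\Omega$, and $1\le p<\infty$. Then $\mathrm{BMO}^p_{\mathcal{S}}(\Omega)\subset L^p_{loc}(\Omega)$.
   Context: A domain is an open connected set. A shape is an open set $S\subset\mathbb{R}^n$ with $0<|S|<\infty$. A basis of shapes in $\Omega$ is a collection of shapes contained in $\Omega$ covering $\Omega$. For $f\in L^1(S)$, $f_S=\frac1{|S|}\int_Sf$. $\mathrm{BMO}^p_{\mathcal{S}}(\Omega)$ is the space of functions $f$ with $f\in L^1(S)$ for all $S\in\mathcal{S}$ such that there is $K\ge0$ with $\big(\frac1{|S|}\int_S|f-f_S|^p\big)^{1/p}\le K$ for all $S\in\mathcal{S}$. *)

theory Defs
  imports "HOL-Analysis.Analysis"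
begin

definition domain :: "'a::euclidean_space set \<Rightarrow> bool" where
  "domain \<Omega> \<longleftrightarrow> open \<Omega> \<and> connected \<Omega>"

definition shape :: "'a::euclidean_space set \<Rightarrow> bool" where
  "shape S \<longleftrightarrow> open S \<and> 0 < emeasure lebesgue S \<and> emeasure lebesgue S < \<infinity>"

definition basis_of_shapes :: "'a::euclidean_space set set \<Rightarrow> 'a set \<Rightarrow> bool" where
  "basis_of_shapes \<S> \<Omega> \<longleftrightarrow> (\<forall>S\<in>\<S>. shape S \<and> S \<subseteq> \<Omega>) \<and> \<Union>\<S> = \<Omega>"

definition avg :: "('a::euclidean_space \<Rightarrow> real) \<Rightarrow> 'a set \<Rightarrow> real" where
  "avg f S = (1 / measure lebesgue S) * (LINT x:S|lebesgue. f x)"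

definition mean_osc :: "real \<Rightarrow> ('a::euclidean_space \<Rightarrow> real) \<Rightarrow> 'a set \<Rightarrow> ennreal" where
  "mean_osc p f S = (\<integral>\<^sup>+ x\<in>S. ennreal (\<bar>f x - avg f S\<bar> powr p) \<partial>lebesgue) / emeasure lebesgue S"

definition BMO :: "real \<Rightarrow> 'a::euclidean_space set set \<Rightarrow> 'a set \<Rightarrow> ('a \<Rightarrow> real) set" where
  "BMO p \<S> \<Omega> = {f. (\<forall>S\<in>\<S>. set_integrable lebesgue S f) \<and>
      (\<exists>K\<ge>0. \<forall>S\<in>\<S>. mean_osc p f S \<le> ennreal (K powr p))}"

definition Lp_loc :: "real \<Rightarrow> 'a::euclidean_space set \<Rightarrow> ('a \<Rightarrow> real) set" where
  "Lp_loc p \<Omega> = {f. \<forall>K. compact K \<and> K \<subseteq> \<Omega> \<longrightarrow>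
      set_borel_measurable lebesgue K f \<and>
      (\<integral>\<^sup>+ x\<in>K. ennreal (\<bar>f x\<bar> powr p) \<partial>lebesgue) < \<infinity>}"

end

theory Submission
  imports Defs
begin

lemma union_meas:
  fixes f :: "'a::euclidean_space \<Rightarrow> real"
  assumes "finite F" "\<forall>S\<in>F. S \<in> sets lebesgue \<and> (\<lambda>x. indicator S x * f x) \<in> borel_measurable lebesgue"
  shows "(\<lambda>x. indicator (\<Union>F) x * f x) \<in> borel_measurable lebesgue"
  using assms
proof (induction F rule: finite_induct)
  case empty
  then show ?case by simp
next
  case (insert A F)
  have hA: "(\<lambda>x. indicator A x * f x) \<in> borel_measurable lebesgue" "A \<in> sets lebesgue"
    using insert by auto
  have hF: "(\<lambda>x. indicator (\<Union>F) x * f x) \<in> borel_measurable lebesgue" using insert by auto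
  have eq: "(\<lambda>x. indicator (\<Union>(insert A F)) x * f x) =
     (\<lambda>x. indicator A x * f x + indicator (\<Union>F) x * f x - indicator A x * (indicator (\<Union>F) x * f x))"
    by (auto simp: indicator_def fun_eq_iff)
  have "(\<lambda>x. indicator A x * (indicator (\<Union>F) x * f x)) \<in> borel_measurable lebesgue"
    using borel_measurable_times[OF borel_measurable_indicator[OF hA(2)] hF] by simp
  then show ?case unfolding eq using hA hF by measurable
qed

lemma powr_sum_bound:
  fixes a b p :: real
  assumes "0 \<le> a" "0 \<le> b" "0 < p"
  shows "(a + b) powr p \<le> 2 powr p * (a powr p + b powr p)"
proof -
  have "(a + b) powr p \<le> (2 * max a b) powr p"
    using assms by (intro powr_mono2) auto
  also have "\<dots> = 2 powr p * max a b powr p"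
    using assms by (simp add: powr_mult)
  also have "max a b powr p \<le> a powr p + b powr p"
    by (simp add: max_def)
  hence "2 powr p * max a b powr p \<le> 2 powr p * (a powr p + b powr p)" by simp
  finally show ?thesis .
qed

lemma shape_piece_finite:
  fixes f :: "'a::euclidean_space \<Rightarrow> real" and S :: "'a set"
  assumes sh: "shape S" and int: "set_integrable lebesgue S f"
    and osc: "mean_osc p f S \<le> ennreal (K powr p)" and p: "1 \<le> p"
  shows "(\<integral>\<^sup>+ x. ennreal (\<bar>indicator S x * f x\<bar> powr p) * indicator S x \<partial>lebesgue) < \<infinity>"
    and "(\<lambda>x. ennreal (\<bar>indicator S x * f x\<bar> powr p) * indicator S x) \<in> borel_measurable lebesgue"
proof -
  define c where "c = avg f S"
  define g where "g = (\<lambda>x. indicator S x * f x)"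
  have Sm: "S \<in> sets lebesgue" using sh unfolding shape_def by auto
  have gm: "g \<in> borel_measurable lebesgue"
    using int unfolding set_integrable_def g_def by (auto dest: borel_measurable_integrable)
  have mu: "emeasure lebesgue S < \<infinity>" "0 < emeasure lebesgue S" using sh unfolding shape_def by auto
  define u where "u = (\<lambda>x. ennreal (\<bar>g x - c\<bar> powr p) * indicator S x)"
  have um: "u \<in> borel_measurable lebesgue" unfolding u_def using gm Sm by measurable
  have ueq: "(\<integral>\<^sup>+ x\<in>S. ennreal (\<bar>f x - avg f S\<bar> powr p) \<partial>lebesgue) = integral\<^sup>N lebesgue u"
    unfolding u_def c_def g_def
    by (intro nn_integral_cong) (auto simp: indicator_def)
  have "integral\<^sup>N lebesgue u / emeasure lebesgue S \<le> ennreal (K powr p)"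
    using osc unfolding mean_osc_def ueq .
  hence uo: "integral\<^sup>N lebesgue u / emeasure lebesgue S * emeasure lebesgue S \<le> ennreal (K powr p) * emeasure lebesgue S"
    by (rule mult_right_mono) simp
  have b1: "emeasure lebesgue S / emeasure lebesgue S = 1"
    using mult_divide_eq_ennreal[of "emeasure lebesgue S" 1] mu by simp
  have "integral\<^sup>N lebesgue u = integral\<^sup>N lebesgue u / emeasure lebesgue S * emeasure lebesgue S"
    by (simp add: ennreal_divide_times b1)
  also note uo
  also have "ennreal (K powr p) * emeasure lebesgue S < \<infinity>"
    using mu by (simp add: ennreal_mult_less_top)
  finally have ufin: "integral\<^sup>N lebesgue u < \<infinity>" .
  define h where "h = (\<lambda>x. ennreal (\<bar>g x\<bar> powr p) * indicator S x)"
  show hm: "(\<lambda>x. ennreal (\<bar>indicator S x * f x\<bar> powr p) * indicator S x) \<in> borel_measurable lebesgue"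
    using gm Sm unfolding g_def by measurable
  have bound: "h x \<le> ennreal (2 powr p) * (u x + ennreal (\<bar>c\<bar> powr p) * indicator S x)" for x
  proof (cases "x \<in> S")
    case True
    have "\<bar>g x\<bar> \<le> \<bar>g x - c\<bar> + \<bar>c\<bar>" by linarith
    hence "\<bar>g x\<bar> powr p \<le> (\<bar>g x - c\<bar> + \<bar>c\<bar>) powr p" using p by (intro powr_mono2) auto
    also have "\<dots> \<le> 2 powr p * (\<bar>g x - c\<bar> powr p + \<bar>c\<bar> powr p)"
      using p by (intro powr_sum_bound) auto
    finally have r: "\<bar>g x\<bar> powr p \<le> 2 powr p * (\<bar>g x - c\<bar> powr p + \<bar>c\<bar> powr p)" .
    show ?thesis using True r unfolding h_def u_def
      by (simp add: ennreal_mult[symmetric] ennreal_plus[symmetric] del: ennreal_plus)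
  next
    case False
    then show ?thesis unfolding h_def by simp
  qed
  have "integral\<^sup>N lebesgue h \<le> (\<integral>\<^sup>+ x. ennreal (2 powr p) * (u x + ennreal (\<bar>c\<bar> powr p) * indicator S x) \<partial>lebesgue)"
    by (intro nn_integral_mono bound)
  also have "\<dots> = ennreal (2 powr p) * (integral\<^sup>N lebesgue u + ennreal (\<bar>c\<bar> powr p) * emeasure lebesgue S)"
    using um Sm by (simp add: nn_integral_cmult nn_integral_add nn_integral_cmult_indicator)
  also have "\<dots> < \<infinity>"
    using ufin mu by (simp add: ennreal_mult_less_top less_top)
  finally show "(\<integral>\<^sup>+ x. ennreal (\<bar>indicator S x * f x\<bar> powr p) * indicator S x \<partial>lebesgue) < \<infinity>"
    unfolding h_def g_def .
qed

theorem lemma3p3: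
  fixes \<Omega> :: "'a::euclidean_space set" and \<S> :: "'a set set" and p :: real
  assumes "domain \<Omega>" and "basis_of_shapes \<S> \<Omega>" and "1 \<le> p"
  shows "BMO p \<S> \<Omega> \<subseteq> Lp_loc p \<Omega>"
proof
  fix f assume "f \<in> BMO p \<S> \<Omega>"
  then obtain C where intS: "\<forall>S\<in>\<S>. set_integrable lebesgue S f" and "C \<ge> 0"
    and oscS: "\<forall>S\<in>\<S>. mean_osc p f S \<le> ennreal (C powr p)"
    unfolding BMO_def by auto
  have shS: "\<forall>S\<in>\<S>. shape S \<and> S \<subseteq> \<Omega>" and UO: "\<Union>\<S> = \<Omega>"
    using assms(2) unfolding basis_of_shapes_def by auto
  show "f \<in> Lp_loc p \<Omega>" unfolding Lp_loc_def
  proof (intro CollectI allI impI conjI)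
    fix K assume K: "compact K \<and> K \<subseteq> \<Omega>"
    have "\<forall>S\<in>\<S>. open S" using shS unfolding shape_def by auto
    then obtain F where F: "F \<subseteq> \<S>" "finite F" "K \<subseteq> \<Union>F"
      using K UO by (metis compactE)
    have Km: "K \<in> sets lebesgue"
      using K by (simp add: compact_imp_closed borel_closed)
    have Fm: "\<forall>S\<in>F. S \<in> sets lebesgue \<and> (\<lambda>x. indicator S x * f x) \<in> borel_measurable lebesgue"
    proof
      fix S assume "S \<in> F"
      hence "S \<in> \<S>" using F by auto
      hence "open S" "set_integrable lebesgue S f" using shS intS unfolding shape_def by auto
      thus "S \<in> sets lebesgue \<and> (\<lambda>x. indicator S x * f x) \<in> borel_measurable lebesgue"
        unfolding set_integrable_def by (auto dest: borel_measurable_integrable)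
    qed
    have UFm: "(\<lambda>x. indicator (\<Union>F) x * f x) \<in> borel_measurable lebesgue"
      using union_meas[OF F(2) Fm] .
    have eqK: "(\<lambda>x. indicator K x *\<^sub>R f x) = (\<lambda>x. indicator K x * (indicator (\<Union>F) x * f x))"
      using F(3) by (auto simp: indicator_def fun_eq_iff)
    show "set_borel_measurable lebesgue K f"
      unfolding set_borel_measurable_def eqK
      using borel_measurable_times[OF borel_measurable_indicator[OF Km] UFm] by simp
    define h where "h = (\<lambda>S x. ennreal (\<bar>indicator S x * f x\<bar> powr p) * (indicator S x :: ennreal))"
    have hfin: "\<forall>S\<in>F. integral\<^sup>N lebesgue (h S) < \<infinity> \<and> h S \<in> borel_measurable lebesgue"
    proof
      fix S assume "S \<in> F"
      hence "S \<in> \<S>" using F by auto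
      hence "shape S" "set_integrable lebesgue S f" "mean_osc p f S \<le> ennreal (C powr p)"
        using shS intS oscS by auto
      from shape_piece_finite[OF this assms(3)]
      show "integral\<^sup>N lebesgue (h S) < \<infinity> \<and> h S \<in> borel_measurable lebesgue"
        unfolding h_def by auto
    qed
    have pw: "ennreal (\<bar>f x\<bar> powr p) * indicator K x \<le> (\<Sum>S\<in>F. h S x)" for x
    proof (cases "x \<in> K")
      case True
      then obtain S0 where S0: "S0 \<in> F" "x \<in> S0" using F(3) by auto
      have "ennreal (\<bar>f x\<bar> powr p) * indicator K x = h S0 x"
        using True S0 unfolding h_def by simp
      also have "\<dots> \<le> (\<Sum>S\<in>F. h S x)"
        using S0 F(2) by (intro member_le_sum) auto
      finally show ?thesis .
    next
      case False
      then show ?thesis by simp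
    qed
    have "(\<integral>\<^sup>+ x\<in>K. ennreal (\<bar>f x\<bar> powr p) \<partial>lebesgue) \<le> (\<integral>\<^sup>+ x. (\<Sum>S\<in>F. h S x) \<partial>lebesgue)"
      by (intro nn_integral_mono pw)
    also have "\<dots> = (\<Sum>S\<in>F. integral\<^sup>N lebesgue (h S))"
      using hfin by (intro nn_integral_sum) auto
    also have "\<dots> < \<infinity>"
      using hfin F(2) by (simp add: ennreal_sum_less_top)
    finally show "(\<integral>\<^sup>+ x\<in>K. ennreal (\<bar>f x\<bar> powr p) \<partial>lebesgue) < \<infinity>" .
  qed
qed

end
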